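(* Let $A\in\mathbb{C}^{2n\times 2n}$ be Hamiltonian and let $f:\mathcal{M}\to\mathbb{R}_{\ge0}$, $f(Z)=\|\operatorname{diag}(Z^HAZ)\|_F^2=\sum_{j=1}^{2n}|\langle AZe_j,Ze_j\rangle|^2$, where $\mathcal{M}\subset\mathbb{C}^{2n\times 2n}$ is the manifold of unitary symplectic matrices. Then for every $Z\in\mathcal{M}$, $$\operatorname{grad} f(Z)=ZX$$ for some matrix $X\in\mathbb{C}^{2n\times 2n}$ which is skew-Hermitian and Hamiltonian and has zero diagonal.
   Context: $J=J_{2n}=\begin{bmatrix}0&I_n\\-I_n&0\end{bmatrix}$; $A$ is Hamiltonian if $(JA)^H=JA$; $Z$ is symplectic if $Z^HJZ=J$. $e_j$ is the $j$-th standard basis vector and $\langle u,v\rangle=v^Hu$. $\mathbb{C}^{2n\times 2n}$ is regarded as a real Euclidean space with inner product $\langle X,Y\rangle_{\mathbb{R}}=\operatorname{Re}\operatorname{tr}(X^HY)$. The function $\tilde f(Z)=\sum_j|\langle AZe_j,Ze_j\rangle|^2$ on all of $\mathbb{C}^{2n\times2n}$ is real-differentiable, with Euclidean gradient $\nabla\tilde f(Z)=\big[\partial\tilde f/\partial\operatorname{Re}z_{jk}+\imath\,\partial\tilde f/\partial\operatorname{Im}z_{jk}\big]_{j,k}$; $\operatorname{grad} f(Z)$ denotes the Riemannian gradient of the restriction $f=\tilde f|_{\mathcal{M}}$, i.e. the orthogonal projection (w.r.t. $\langle\cdot,\cdot\rangle_{\mathbb{R}}$) of $\nabla\tilde f(Z)$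 onto the tangent space $T_Z\mathcal{M}=\{ZK:\ K\text{ skew-Hermitian Hamiltonian}\}$. *)

theory Defs
  imports Complex_Main "Jordan_Normal_Form.Matrix"
begin

definition ctrans :: "complex mat \<Rightarrow> complex mat" where
  "ctrans X = mat (dim_col X) (dim_row X) (\<lambda>(i,j). cnj (X $$ (j,i)))"

definition Jmat :: "nat \<Rightarrow> complex mat" where
  "Jmat n = four_block_mat (0\<^sub>m n n) (1\<^sub>m n) (- 1\<^sub>m n) (0\<^sub>m n n)"

definition hamiltonian :: "nat \<Rightarrow> complex mat \<Rightarrow> bool" where
  "hamiltonian n A \<longleftrightarrow> A \<in> carrier_mat (2*n) (2*n) \<and>
     ctrans (Jmat n * A) = Jmat n * A"

definition symplectic :: "nat \<Rightarrow> complex mat \<Rightarrow> bool" where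
  "symplectic n Z \<longleftrightarrow> Z \<in> carrier_mat (2*n) (2*n) \<and>
     ctrans Z * Jmat n * Z = Jmat n"

definition unitary_mat :: "nat \<Rightarrow> complex mat \<Rightarrow> bool" where
  "unitary_mat m Z \<longleftrightarrow> Z \<in> carrier_mat m m \<and> ctrans Z * Z = 1\<^sub>m m"

definition skew_hermitian :: "complex mat \<Rightarrow> bool" where
  "skew_hermitian K \<longleftrightarrow> ctrans K = - K"

definition USp :: "nat \<Rightarrow> complex mat set" where
  "USp n = {Z. unitary_mat (2*n) Z \<and> symplectic n Z}"

definition cinner :: "complex vec \<Rightarrow> complex vec \<Rightarrow> complex" where
  "cinner u v = (\<Sum>i<dim_vec u. u $ i * cnj (v $ i))"

definition ftilde :: "nat \<Rightarrow> complex mat \<Rightarrow> complex mat \<Rightarrow> real" where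
  "ftilde n A Z = (\<Sum>j<2*n. (cmod (cinner (A *\<^sub>v col Z j) (col Z j)))^2)"

definition rinner :: "complex mat \<Rightarrow> complex mat \<Rightarrow> real" where
  "rinner X Y = Re (\<Sum>i<dim_col X. (ctrans X * Y) $$ (i,i))"

definition Emat :: "nat \<Rightarrow> nat \<Rightarrow> nat \<Rightarrow> complex mat" where
  "Emat m j k = mat m m (\<lambda>(a,b). if a = j \<and> b = k then 1 else 0)"

(* Euclidean gradient of a real function g on m x m complex matrices:
   entry (j,k) = dg/dRe z_jk + i dg/dIm z_jk *)
definition egrad :: "nat \<Rightarrow> (complex mat \<Rightarrow> real) \<Rightarrow> complex mat \<Rightarrow> complex mat" where
  "egrad m g Z = mat m m (\<lambda>(j,k).
      complex_of_real (THE D. ((\<lambda>t. g (Z + complex_of_real t \<cdot>\<^sub>m Emat m j k)) has_real_derivative D) (at 0))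
      + \<i> * complex_of_real (THE D. ((\<lambda>t. g (Z + (\<i> * complex_of_real t) \<cdot>\<^sub>m Emat m j k)) has_real_derivative D) (at 0)))"

definition tangent_space :: "nat \<Rightarrow> complex mat \<Rightarrow> complex mat set" where
  "tangent_space n Z = {Z * K | K. hamiltonian n K \<and> skew_hermitian K}"

definition orth_proj :: "complex mat set \<Rightarrow> complex mat \<Rightarrow> complex mat" where
  "orth_proj T G = (THE P. P \<in> T \<and> (\<forall>Y\<in>T. rinner (G - P) Y = 0))"

definition rgrad :: "nat \<Rightarrow> complex mat \<Rightarrow> complex mat \<Rightarrow> complex mat" where
  "rgrad n A Z = orth_proj (tangent_space n Z) (egrad (2*n) (ftilde n A) Z)"

end

theory Submission
  imports Defs
begin


lemma ctrans_dim[simp]: "dim_row (ctrans A) = dim_col A" "dim_col (ctrans A) = dim_row A"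
  by (auto simp: ctrans_def)

lemma ctrans_carrier[simp]: "A \<in> carrier_mat r c \<Longrightarrow> ctrans A \<in> carrier_mat c r"
  unfolding carrier_mat_def by simp

lemma index_ctrans[simp]: "i < dim_col A \<Longrightarrow> j < dim_row A \<Longrightarrow> ctrans A $$ (i,j) = cnj (A $$ (j,i))"
  by (auto simp: ctrans_def)

lemma ctrans_mult: assumes "A \<in> carrier_mat a b" "B \<in> carrier_mat b c"
  shows "ctrans (A * B) = ctrans B * ctrans A"
  using assms by (intro eq_matI) (auto simp: scalar_prod_def mult.commute intro!: sum.cong)

lemma ctrans_add: assumes "A \<in> carrier_mat a b" "B \<in> carrier_mat a b"
  shows "ctrans (A + B) = ctrans A + ctrans B"
  using assms by (intro eq_matI) auto

lemma ctrans_minus: assumes "A \<in> carrier_mat a b" "B \<in> carrier_mat a b"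
  shows "ctrans (A - B) = ctrans A - ctrans B"
  using assms by (intro eq_matI) auto

lemma ctrans_uminus: "ctrans (- A) = - ctrans A"
  by (intro eq_matI) auto

lemma ctrans_smult: "ctrans (c \<cdot>\<^sub>m A) = cnj c \<cdot>\<^sub>m ctrans A"
  by (intro eq_matI) auto

lemma ctrans_ctrans[simp]: "ctrans (ctrans A) = A"
  by (intro eq_matI) auto

definition tr :: "complex mat \<Rightarrow> complex" where
  "tr M = (\<Sum>i<dim_row M. M $$ (i,i))"

lemma tr_comm: assumes "A \<in> carrier_mat a b" "B \<in> carrier_mat b a"
  shows "tr (A * B) = tr (B * A)"
proof -
  have "tr (A * B) = (\<Sum>i<a. \<Sum>k<b. A $$ (i,k) * B $$ (k,i))"
    using assms by (auto simp: tr_def scalar_prod_def atLeast0LessThan intro!: sum.cong)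
  also have "\<dots> = (\<Sum>k<b. \<Sum>i<a. B $$ (k,i) * A $$ (i,k))"
    by (subst sum.swap) (simp add: mult.commute)
  also have "\<dots> = tr (B * A)"
    using assms by (auto simp: tr_def scalar_prod_def atLeast0LessThan intro!: sum.cong)
  finally show ?thesis .
qed

lemma tr_ctrans: "dim_row A = dim_col A \<Longrightarrow> tr (ctrans A) = cnj (tr A)"
  by (auto simp: tr_def)

lemma tr_add: "A \<in> carrier_mat a a \<Longrightarrow> B \<in> carrier_mat a a \<Longrightarrow> tr (A + B) = tr A + tr B"
  by (auto simp: tr_def sum.distrib)

lemma tr_minus: "A \<in> carrier_mat a a \<Longrightarrow> B \<in> carrier_mat a a \<Longrightarrow> tr (A - B) = tr A - tr B"
  by (auto simp: tr_def sum_subtractf)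

lemma tr_smult: "A \<in> carrier_mat a a \<Longrightarrow> tr (c \<cdot>\<^sub>m A) = c * tr A"
  by (auto simp: tr_def sum_distrib_left)

lemma tr_uminus: "A \<in> carrier_mat a a \<Longrightarrow> tr (- A) = - tr A"
  by (auto simp: tr_def sum_negf)

lemma rinner_tr: "A \<in> carrier_mat a b \<Longrightarrow> rinner A B = Re (tr (ctrans A * B))"
  by (auto simp: rinner_def tr_def)

definition sig :: "nat \<Rightarrow> nat \<Rightarrow> nat" where "sig n i = (if i < n then i + n else i - n)"
definition sg :: "nat \<Rightarrow> nat \<Rightarrow> complex" where "sg n i = (if i < n then 1 else -1)"

lemma Jmat_carrier[simp]: "Jmat n \<in> carrier_mat (2*n) (2*n)"
  unfolding Jmat_def by (metis four_block_carrier_mat mult_2 zero_carrier_mat)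

lemma Jmat_dim[simp]: "dim_row (Jmat n) = 2*n" "dim_col (Jmat n) = 2*n"
  using Jmat_carrier[of n] unfolding carrier_mat_def by auto

lemma Jmat_index: "i < 2*n \<Longrightarrow> j < 2*n \<Longrightarrow> Jmat n $$ (i,j) = (if j = sig n i then sg n i else 0)"
  unfolding Jmat_def sig_def sg_def by auto

lemma sig_lt: "i < 2*n \<Longrightarrow> sig n i < 2*n" by (auto simp: sig_def)
lemma sig_sig: "i < 2*n \<Longrightarrow> sig n (sig n i) = i" by (auto simp: sig_def)
lemma sg_sig: "i < 2*n \<Longrightarrow> sg n (sig n i) = - sg n i" by (auto simp: sig_def sg_def)
lemma sg_sq: "sg n i * sg n i = 1" by (auto simp: sg_def)

lemma sig_neq: "i < 2*n \<Longrightarrow> sig n i \<noteq> i" by (auto simp: sig_def)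
lemma sig_eq: "i < 2*n \<Longrightarrow> l < 2*n \<Longrightarrow> (i = sig n l) = (l = sig n i)" by (auto simp: sig_def)

lemma sum_delta_sig: fixes c :: complex and g :: "nat \<Rightarrow> complex" assumes "i < 2*n" shows "(\<Sum>k\<in>{0..<2*n}. (if k = sig n i then c else 0) * g k) = c * g (sig n i)"
proof -
  have "(\<Sum>k\<in>{0..<2*n}. (if k = sig n i then c else 0) * g k) = (\<Sum>k\<in>{0..<2*n}. if k = sig n i then c * g k else 0)"
    by (rule sum.cong) auto
  also have "\<dots> = c * g (sig n i)" using sig_lt[OF assms] by simp
  finally show ?thesis .
qed

lemma JJ: "Jmat n * Jmat n = - 1\<^sub>m (2*n)"
proof (intro eq_matI)
  fix i j assume ij: "i < dim_row (- 1\<^sub>m (2*n))" "j < dim_col (- 1\<^sub>m (2*n))"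
  hence "(Jmat n * Jmat n) $$ (i,j) = (\<Sum>k\<in>{0..<2*n}. (if k = sig n i then sg n i else 0) * Jmat n $$ (k,j))"
    by (auto simp: scalar_prod_def Jmat_index intro!: sum.cong)
  also have "\<dots> = sg n i * Jmat n $$ (sig n i, j)" using ij by (intro sum_delta_sig) auto
  also have "Jmat n $$ (sig n i, j) = (if j = i then - sg n i else 0)"
    using ij sig_lt[of i n] by (simp add: Jmat_index sig_sig sg_sig)
  also have "sg n i * (if j = i then - sg n i else 0) = (- 1\<^sub>m (2*n)) $$ (i,j)"
    using ij by (simp add: sg_def)
  finally show "(Jmat n * Jmat n) $$ (i,j) = (- 1\<^sub>m (2*n)) $$ (i,j)" .
qed auto

lemma ctrans_J: "ctrans (Jmat n) = - Jmat n"
proof (intro eq_matI)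
  fix i j assume ij: "i < dim_row (- Jmat n)" "j < dim_col (- Jmat n)"
  hence ij': "i < 2*n" "j < 2*n" by auto
  have "ctrans (Jmat n) $$ (i,j) = cnj (if i = sig n j then sg n j else 0)"
    using ij' by (simp add: Jmat_index)
  also have "\<dots> = (if j = sig n i then cnj (sg n (sig n i)) else 0)"
    using sig_eq[OF ij'] by auto
  also have "\<dots> = (if j = sig n i then - sg n i else 0)"
    using sg_sig[OF ij'(1)] by (simp add: sg_def)
  also have "\<dots> = (- Jmat n) $$ (i,j)" using ij' by (simp add: Jmat_index)
  finally show "ctrans (Jmat n) $$ (i,j) = (- Jmat n) $$ (i,j)" .
qed auto

lemma JSJ_diag: assumes "S \<in> carrier_mat (2*n) (2*n)" "i < 2*n"
  shows "(Jmat n * S * Jmat n) $$ (i,i) = - (S $$ (sig n i, sig n i))"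
proof -
  have "(Jmat n * S * Jmat n) $$ (i,i) = (\<Sum>l\<in>{0..<2*n}. (Jmat n * S) $$ (i,l) * Jmat n $$ (l,i))"
    using assms by (simp add: scalar_prod_def)
  also have "\<dots> = (\<Sum>l\<in>{0..<2*n}. (if l = sig n i then - sg n i else 0) * (Jmat n * S) $$ (i,l))"
  proof (intro sum.cong refl)
    fix l assume "l \<in> {0..<2*n}"
    hence l: "l < 2*n" by auto
    have "Jmat n $$ (l,i) = (if l = sig n i then - sg n i else 0)"
    proof (cases "l = sig n i")
      case True thus ?thesis using assms sig_sig[of i n] sg_sig[of i n] sig_lt[of i n] by (simp add: Jmat_index)
    next
      case False
      hence "i \<noteq> sig n l" using sig_eq[OF assms(2) l] by blast
      thus ?thesis using False assms l by (simp add: Jmat_index)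
    qed
    thus "(Jmat n * S) $$ (i,l) * Jmat n $$ (l,i) = (if l = sig n i then - sg n i else 0) * (Jmat n * S) $$ (i,l)"
      by (simp add: mult.commute)
  qed
  also have "\<dots> = - sg n i * (Jmat n * S) $$ (i, sig n i)" using assms by (intro sum_delta_sig) auto
  also have "(Jmat n * S) $$ (i, sig n i) = (\<Sum>k\<in>{0..<2*n}. (if k = sig n i then sg n i else 0) * S $$ (k, sig n i))"
    using assms sig_lt[of i n] by (auto simp: scalar_prod_def Jmat_index intro!: sum.cong)
  also have "\<dots> = sg n i * S $$ (sig n i, sig n i)" using assms by (intro sum_delta_sig) auto
  finally have "(Jmat n * S * Jmat n) $$ (i,i) = - sg n i * (sg n i * S $$ (sig n i, sig n i))" .
  moreover have "- sg n i * (sg n i * x) = - x" for x :: complex by (simp add: sg_def)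
  ultimately show ?thesis by simp
qed



lemma mv_index: assumes "A \<in> carrier_mat m m" "w \<in> carrier_vec m" "i < m"
  shows "(A *\<^sub>v w) $ i = (\<Sum>k<m. A $$ (i,k) * w $ k)"
  using assms by (auto simp: scalar_prod_def atLeast0LessThan intro!: sum.cong)

lemma Emat_index: "i < m \<Longrightarrow> j < m \<Longrightarrow> Emat m p q $$ (i,j) = (if i = p \<and> j = q then 1 else 0)"
  by (simp add: Emat_def)

lemma Emat_carrier[simp]: "Emat m p q \<in> carrier_mat m m"
  by (simp add: Emat_def)

lemma Emat_dim[simp]: "dim_row (Emat m p q) = m" "dim_col (Emat m p q) = m"
  by (simp_all add: Emat_def)

lemma col_upd: assumes "Z \<in> carrier_mat m m" "j < m" "p < m"
  shows "col (Z + s \<cdot>\<^sub>m Emat m p q) j = (if j = q then col Z j + s \<cdot>\<^sub>v unit_vec m p else col Z j)"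
  using assms by (intro eq_vecI) (auto simp: Emat_index simp del: col_add)

lemma cinner_expand:
  assumes A: "A \<in> carrier_mat m m" and z: "z \<in> carrier_vec m" and p: "p < m"
  shows "cinner (A *\<^sub>v (z + s \<cdot>\<^sub>v unit_vec m p)) (z + s \<cdot>\<^sub>v unit_vec m p)
    = cinner (A *\<^sub>v z) z + s * (\<Sum>i<m. A $$ (i,p) * cnj (z $ i)) + cnj s * (A *\<^sub>v z) $ p
      + s * cnj s * A $$ (p,p)"
proof -
  have w: "z + s \<cdot>\<^sub>v unit_vec m p \<in> carrier_vec m" using z by auto
  have mw: "(A *\<^sub>v (z + s \<cdot>\<^sub>v unit_vec m p)) $ i = (A *\<^sub>v z) $ i + s * A $$ (i,p)" if i: "i < m" for i
  proof -
    have "(A *\<^sub>v (z + s \<cdot>\<^sub>v unit_vec m p)) $ i = (\<Sum>k<m. A $$ (i,k) * (z $ k + s * (if k = p then 1 else 0)))"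
      using mv_index[OF A w i] z p by (auto intro!: sum.cong simp: index_unit_vec)
    also have "\<dots> = (\<Sum>k<m. A $$ (i,k) * z $ k) + (\<Sum>k<m. if k = p then s * A $$ (i,k) else 0)"
      by (subst sum.distrib[symmetric]) (auto intro!: sum.cong simp: algebra_simps)
    also have "\<dots> = (A *\<^sub>v z) $ i + s * A $$ (i,p)"
      using mv_index[OF A z i] p by simp
    finally show ?thesis .
  qed
  have "cinner (A *\<^sub>v (z + s \<cdot>\<^sub>v unit_vec m p)) (z + s \<cdot>\<^sub>v unit_vec m p)
     = (\<Sum>i<m. ((A *\<^sub>v z) $ i + s * A $$ (i,p)) * cnj (z $ i + s * (if i = p then 1 else 0)))"
    unfolding cinner_def using A z mw p by (auto intro!: sum.cong)
  also have "\<dots> = (\<Sum>i<m. (A *\<^sub>v z) $ i * cnj (z $ i)) + (\<Sum>i<m. s * (A $$ (i,p) * cnj (z $ i)))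
      + (\<Sum>i<m. if i = p then cnj s * (A *\<^sub>v z) $ i + s * cnj s * A $$ (i,p) else 0)"
    by (simp only: sum.distrib[symmetric]) (auto intro!: sum.cong simp: algebra_simps)
  also have "\<dots> = cinner (A *\<^sub>v z) z + s * (\<Sum>i<m. A $$ (i,p) * cnj (z $ i)) + cnj s * (A *\<^sub>v z) $ p
      + s * cnj s * A $$ (p,p)"
    using A z p by (simp add: cinner_def sum_distrib_left)
  finally show ?thesis .
qed

definition av :: "complex mat \<Rightarrow> complex mat \<Rightarrow> nat \<Rightarrow> complex" where
  "av A Z j = cinner (A *\<^sub>v col Z j) (col Z j)"

definition vv :: "nat \<Rightarrow> complex mat \<Rightarrow> complex mat \<Rightarrow> nat \<Rightarrow> nat \<Rightarrow> complex" where
  "vv m A Z p q = (\<Sum>i<m. A $$ (i,p) * cnj (Z $$ (i,q)))"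

lemma sum_if_split: assumes "q < (m::nat)"
  shows "(\<Sum>j<m. if j = q then (X::real) else Y j) = (\<Sum>j<m. if j = q then 0 else Y j) + X"
proof -
  have "(\<Sum>j<m. if j = q then X else Y j) = (\<Sum>j<m. (if j = q then 0 else Y j) + (if j = q then X else 0))"
    by (rule sum.cong) auto
  also have "\<dots> = (\<Sum>j<m. if j = q then 0 else Y j) + (\<Sum>j<m. if j = q then X else 0)" by (simp add: sum.distrib)
  also have "(\<Sum>j<m. if j = q then X else 0) = X" using sum.delta[of "{..<m}" q "\<lambda>_. X"] assms by simp
  finally show ?thesis .
qed

lemma ftilde_upd:
  assumes A: "A \<in> carrier_mat (2*n) (2*n)" and Z: "Z \<in> carrier_mat (2*n) (2*n)"
    and p: "p < 2*n" and q: "q < 2*n"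
  shows "ftilde n A (Z + s \<cdot>\<^sub>m Emat (2*n) p q) =
    (\<Sum>j<2*n. if j = q then 0 else (cmod (av A Z j))^2) +
    (cmod (av A Z q + s * vv (2*n) A Z p q + cnj s * (A *\<^sub>v col Z q) $ p + s * cnj s * A $$ (p,p)))^2"
proof -
  have "ftilde n A (Z + s \<cdot>\<^sub>m Emat (2*n) p q) = (\<Sum>j<2*n. if j = q then
     (cmod (av A Z q + s * vv (2*n) A Z p q + cnj s * (A *\<^sub>v col Z q) $ p + s * cnj s * A $$ (p,p)))^2
     else (cmod (av A Z j))^2)"
    unfolding ftilde_def
  proof (rule sum.cong[OF refl])
    fix j assume "j \<in> {..<2*n}" hence j: "j < 2*n" by auto
    show "(cmod (cinner (A *\<^sub>v col (Z + s \<cdot>\<^sub>m Emat (2*n) p q) j) (col (Z + s \<cdot>\<^sub>m Emat (2*n) p q) j)))\<^sup>2 =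
      (if j = q then (cmod (av A Z q + s * vv (2*n) A Z p q + cnj s * (A *\<^sub>v col Z q) $ p + s * cnj s * A $$ (p,p)))^2
       else (cmod (av A Z j))^2)"
    proof (cases "j = q")
      case True
      have cz: "col Z q \<in> carrier_vec (2*n)" using Z q by auto
      have "(\<Sum>i<2*n. A $$ (i,p) * cnj (col Z q $ i)) = vv (2*n) A Z p q"
        unfolding vv_def using Z q by (auto intro!: sum.cong)
      thus ?thesis using True col_upd[OF Z j p, of s q] cinner_expand[OF A cz p, of s]
        by (simp add: av_def)
    next
      case False
      thus ?thesis using col_upd[OF Z j p, of s q] by (simp add: av_def)
    qed
  qed
  also have "\<dots> = (\<Sum>j<2*n. if j = q then 0 else (cmod (av A Z j))^2) +
    (cmod (av A Z q + s * vv (2*n) A Z p q + cnj s * (A *\<^sub>v col Z q) $ p + s * cnj s * A $$ (p,p)))^2"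
    by (rule sum_if_split[OF q])
  finally show ?thesis .
qed



lemma deriv_quad: fixes C :: real and a \<alpha> \<beta> :: complex
  shows "((\<lambda>t. C + (cmod (a + of_real t * \<alpha> + of_real t ^ 2 * \<beta>))^2) has_real_derivative
          2 * (Re a * Re \<alpha> + Im a * Im \<alpha>)) (at 0)"
proof -
  have eq: "(\<lambda>t. C + (cmod (a + of_real t * \<alpha> + of_real t ^ 2 * \<beta>))^2) =
     (\<lambda>t. C + (Re a + t * Re \<alpha> + t^2 * Re \<beta>)^2 + (Im a + t * Im \<alpha> + t^2 * Im \<beta>)^2)"
    by (rule ext) (simp add: cmod_power2)
  have "((\<lambda>t. C + (Re a + t * Re \<alpha> + t^2 * Re \<beta>)^2 + (Im a + t * Im \<alpha> + t^2 * Im \<beta>)^2) has_real_derivative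
          2 * (Re a * Re \<alpha> + Im a * Im \<alpha>)) (at 0)"
    by (auto intro!: derivative_eq_intros simp: algebra_simps)
  thus ?thesis unfolding eq .
qed

lemma the_deriv: "(f has_real_derivative D) (at 0) \<Longrightarrow> (THE D. (f has_real_derivative D) (at 0)) = D"
  by (rule the_equality) (auto intro: DERIV_unique)

lemma egrad_entry:
  assumes A: "A \<in> carrier_mat (2*n) (2*n)" and Z: "Z \<in> carrier_mat (2*n) (2*n)"
    and p: "p < 2*n" and q: "q < 2*n"
  shows "egrad (2*n) (ftilde n A) Z $$ (p,q) =
     2 * (cnj (av A Z q) * (A *\<^sub>v col Z q) $ p + av A Z q * cnj (vv (2*n) A Z p q))"
proof -
  define a where "a = av A Z q"
  define v where "v = vv (2*n) A Z p q"
  define u where "u = (A *\<^sub>v col Z q) $ p"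
  define b where "b = A $$ (p,p)"
  define C where "C = (\<Sum>j<2*n. if j = q then 0 else (cmod (av A Z j))^2)"
  have f1: "(\<lambda>t. ftilde n A (Z + complex_of_real t \<cdot>\<^sub>m Emat (2*n) p q)) =
     (\<lambda>t. C + (cmod (a + of_real t * (v + u) + of_real t ^ 2 * b))^2)"
  proof (rule ext)
    fix t :: real
    have e: "a + complex_of_real t * v + cnj (complex_of_real t) * u + complex_of_real t * cnj (complex_of_real t) * b
        = a + of_real t * (v + u) + of_real t ^ 2 * b"
      by (simp add: algebra_simps power2_eq_square)
    have X: "ftilde n A (Z + complex_of_real t \<cdot>\<^sub>m Emat (2*n) p q) =
       C + (cmod (a + complex_of_real t * v + cnj (complex_of_real t) * u + complex_of_real t * cnj (complex_of_real t) * b))^2"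
      using ftilde_upd[OF A Z p q, of "complex_of_real t"] unfolding a_def v_def u_def b_def C_def .
    show "ftilde n A (Z + complex_of_real t \<cdot>\<^sub>m Emat (2*n) p q) =
       C + (cmod (a + of_real t * (v + u) + of_real t ^ 2 * b))^2"
      using X unfolding e .
  qed
  have f2: "(\<lambda>t. ftilde n A (Z + (\<i> * complex_of_real t) \<cdot>\<^sub>m Emat (2*n) p q)) =
     (\<lambda>t. C + (cmod (a + of_real t * (\<i> * v - \<i> * u) + of_real t ^ 2 * b))^2)"
  proof (rule ext)
    fix t :: real
    have e: "a + (\<i> * complex_of_real t) * v + cnj (\<i> * complex_of_real t) * u + (\<i> * complex_of_real t) * cnj (\<i> * complex_of_real t) * b
        = a + of_real t * (\<i> * v - \<i> * u) + of_real t ^ 2 * b"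
      by (simp add: algebra_simps power2_eq_square)
    have X: "ftilde n A (Z + (\<i> * complex_of_real t) \<cdot>\<^sub>m Emat (2*n) p q) =
       C + (cmod (a + (\<i> * complex_of_real t) * v + cnj (\<i> * complex_of_real t) * u + (\<i> * complex_of_real t) * cnj (\<i> * complex_of_real t) * b))^2"
      using ftilde_upd[OF A Z p q, of "\<i> * complex_of_real t"] unfolding a_def v_def u_def b_def C_def .
    show "ftilde n A (Z + (\<i> * complex_of_real t) \<cdot>\<^sub>m Emat (2*n) p q) =
       C + (cmod (a + of_real t * (\<i> * v - \<i> * u) + of_real t ^ 2 * b))^2"
      using X unfolding e .
  qed
  have "egrad (2*n) (ftilde n A) Z $$ (p,q) =
     complex_of_real (2 * (Re a * Re (v + u) + Im a * Im (v + u))) +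
     \<i> * complex_of_real (2 * (Re a * Re (\<i> * v - \<i> * u) + Im a * Im (\<i> * v - \<i> * u)))"
    unfolding egrad_def using p q f1 f2 by (simp add: the_deriv[OF deriv_quad])
  also have "\<dots> = 2 * (cnj a * u + a * cnj v)"
    by (simp add: complex_eq_iff algebra_simps)
  finally show ?thesis unfolding a_def u_def v_def .
qed

lemma W_diag:
  assumes A: "A \<in> carrier_mat (2*n) (2*n)" and Z: "Z \<in> carrier_mat (2*n) (2*n)" and j: "j < 2*n"
  shows "Im ((ctrans Z * egrad (2*n) (ftilde n A) Z) $$ (j,j)) = 0"
proof -
  define a where "a = av A Z j"
  define u where "u = (\<lambda>p. (A *\<^sub>v col Z j) $ p)"
  have cz: "col Z j \<in> carrier_vec (2*n)" using Z j by auto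
  have u: "u p = (\<Sum>k<2*n. A $$ (p,k) * Z $$ (k,j))" if "p < 2*n" for p
    unfolding u_def using mv_index[OF A cz that] Z j A by (auto intro!: sum.cong)
  have a: "a = (\<Sum>p<2*n. u p * cnj (Z $$ (p,j)))"
    unfolding a_def av_def cinner_def u_def using Z j A by (auto intro!: sum.cong)
  have "(ctrans Z * egrad (2*n) (ftilde n A) Z) $$ (j,j) =
     (\<Sum>p<2*n. cnj (Z $$ (p,j)) * (2 * (cnj a * u p + a * cnj (vv (2*n) A Z p j))))"
  proof -
    have G: "egrad (2*n) (ftilde n A) Z \<in> carrier_mat (2*n) (2*n)" by (simp add: egrad_def)
    have "(ctrans Z * egrad (2*n) (ftilde n A) Z) $$ (j,j) =
       (\<Sum>p<2*n. ctrans Z $$ (j,p) * egrad (2*n) (ftilde n A) Z $$ (p,j))"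
      using G Z j by (simp add: scalar_prod_def atLeast0LessThan)
    also have "\<dots> = (\<Sum>p<2*n. cnj (Z $$ (p,j)) * (2 * (cnj a * u p + a * cnj (vv (2*n) A Z p j))))"
      unfolding u_def a_def
      by (rule sum.cong[OF refl]) (use Z j in \<open>simp add: egrad_entry[OF A Z _ j] del: index_mult_mat_vec\<close>)
    finally show ?thesis .
  qed
  also have "\<dots> = 2 * cnj a * (\<Sum>p<2*n. u p * cnj (Z $$ (p,j)))
      + 2 * a * cnj (\<Sum>p<2*n. Z $$ (p,j) * vv (2*n) A Z p j)"
    by (simp add: sum_distrib_left sum.distrib algebra_simps)
  also have "(\<Sum>p<2*n. Z $$ (p,j) * vv (2*n) A Z p j) = (\<Sum>p<2*n. \<Sum>i<2*n. Z $$ (p,j) * (A $$ (i,p) * cnj (Z $$ (i,j))))"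
    by (simp add: vv_def sum_distrib_left)
  also have "\<dots> = (\<Sum>i<2*n. \<Sum>p<2*n. Z $$ (p,j) * (A $$ (i,p) * cnj (Z $$ (i,j))))"
    by (rule sum.swap)
  also have "\<dots> = (\<Sum>i<2*n. u i * cnj (Z $$ (i,j)))"
    by (auto simp: u sum_distrib_left sum_distrib_right algebra_simps intro!: sum.cong)
  finally have "(ctrans Z * egrad (2*n) (ftilde n A) Z) $$ (j,j) = 2 * cnj a * a + 2 * a * cnj a"
    using a by simp
  thus ?thesis by simp
qed



definition ip :: "nat \<Rightarrow> complex mat \<Rightarrow> complex mat \<Rightarrow> complex" where
  "ip m M N = (\<Sum>i<m. \<Sum>k<m. cnj (M $$ (k,i)) * N $$ (k,i))"

lemma tr_ip: assumes "M \<in> carrier_mat m m" "N \<in> carrier_mat m m"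
  shows "tr (ctrans M * N) = ip m M N"
  using assms by (auto simp: tr_def ip_def scalar_prod_def atLeast0LessThan intro!: sum.cong)

lemma rinner_ip: assumes "M \<in> carrier_mat m m" "N \<in> carrier_mat m m"
  shows "rinner M N = Re (ip m M N)"
  using rinner_tr[OF assms(1)] tr_ip[OF assms] by simp

lemma sum_sig: "(\<Sum>i<2*n. f (sig n i)) = (\<Sum>i<2*n. f i)"
  by (rule sum.reindex_bij_witness[where i = "sig n" and j = "sig n"])
     (auto simp: sig_sig sig_lt)

lemma J_mult_index: assumes "M \<in> carrier_mat (2*n) c" "i < 2*n" "j < c"
  shows "(Jmat n * M) $$ (i,j) = sg n i * M $$ (sig n i, j)"
proof -
  have "(Jmat n * M) $$ (i,j) = (\<Sum>k\<in>{0..<2*n}. (if k = sig n i then sg n i else 0) * M $$ (k,j))"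
    using assms by (auto simp: scalar_prod_def Jmat_index intro!: sum.cong)
  also have "\<dots> = sg n i * M $$ (sig n i, j)" using assms by (intro sum_delta_sig) auto
  finally show ?thesis .
qed

lemma mult_J_index: assumes "M \<in> carrier_mat r (2*n)" "i < r" "j < 2*n"
  shows "(M * Jmat n) $$ (i,j) = - sg n j * M $$ (i, sig n j)"
proof -
  have "(M * Jmat n) $$ (i,j) = (\<Sum>l\<in>{0..<2*n}. M $$ (i,l) * Jmat n $$ (l,j))"
    using assms by (simp add: scalar_prod_def)
  also have "\<dots> = (\<Sum>l\<in>{0..<2*n}. (if l = sig n j then - sg n j else 0) * M $$ (i,l))"
  proof (intro sum.cong refl)
    fix l assume "l \<in> {0..<2*n}"
    hence l: "l < 2*n" by auto
    have "Jmat n $$ (l,j) = (if l = sig n j then - sg n j else 0)"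
    proof (cases "l = sig n j")
      case True thus ?thesis using assms sig_sig[of j n] sg_sig[of j n] sig_lt[of j n] by (simp add: Jmat_index)
    next
      case False
      hence "j \<noteq> sig n l" using sig_eq[OF assms(3) l] by blast
      thus ?thesis using False assms l by (simp add: Jmat_index)
    qed
    thus "M $$ (i,l) * Jmat n $$ (l,j) = (if l = sig n j then - sg n j else 0) * M $$ (i,l)"
      by (simp add: mult.commute)
  qed
  also have "\<dots> = - sg n j * M $$ (i, sig n j)" using assms by (intro sum_delta_sig) auto
  finally show ?thesis .
qed

lemma ham_skew_entry:
  assumes H: "hamiltonian n K" and S: "skew_hermitian K" and i: "i < 2*n" and j: "j < 2*n"
  shows "K $$ (sig n i, sig n j) = sg n i * sg n j * K $$ (i,j)"
proof -
  have K: "K \<in> carrier_mat (2*n) (2*n)" using H by (simp add: hamiltonian_def)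
  have "ctrans (Jmat n * K) = ctrans K * ctrans (Jmat n)"
    using K by (intro ctrans_mult) auto
  also have "\<dots> = K * Jmat n" using S K
    by (simp add: skew_hermitian_def ctrans_J uminus_mult_left_mat uminus_mult_right_mat)
  finally have "Jmat n * K = K * Jmat n" using H by (simp add: hamiltonian_def)
  hence "(Jmat n * K) $$ (i, sig n j) = (K * Jmat n) $$ (i, sig n j)" by simp
  hence "sg n i * K $$ (sig n i, sig n j) = - sg n (sig n j) * K $$ (i, sig n (sig n j))"
    using J_mult_index[OF K i sig_lt[OF j]] mult_J_index[OF K i sig_lt[OF j]] by simp
  hence "sg n i * K $$ (sig n i, sig n j) = sg n j * K $$ (i, j)"
    using sig_sig[OF j] sg_sig[OF j] by simp
  hence "sg n i * (sg n i * K $$ (sig n i, sig n j)) = sg n i * (sg n j * K $$ (i, j))" by simp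
  thus ?thesis using sg_sq[of n i] by (simp add: mult.assoc[symmetric])
qed

lemma skew_entry: assumes "skew_hermitian K" "K \<in> carrier_mat m m" "i < m" "j < m"
  shows "K $$ (i,j) = - cnj (K $$ (j,i))"
proof -
  have "ctrans K $$ (i,j) = (- K) $$ (i,j)" using assms(1) by (simp add: skew_hermitian_def)
  hence "cnj (K $$ (j,i)) = - K $$ (i,j)" using assms by simp
  thus ?thesis by simp
qed



definition Sf :: "complex mat \<Rightarrow> nat \<Rightarrow> nat \<Rightarrow> complex" where
  "Sf W i j = (W $$ (i,j) - cnj (W $$ (j,i))) / 2"

definition Xm :: "nat \<Rightarrow> complex mat \<Rightarrow> complex mat" where
  "Xm n W = mat (2*n) (2*n) (\<lambda>(i,j). (Sf W i j + sg n i * sg n j * Sf W (sig n i) (sig n j)) / 2)"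

lemma Sf_cnj[simp]: "cnj (Sf W i j) = - Sf W j i"
  unfolding Sf_def by (simp add: complex_eq_iff field_simps)

lemma sg_cnj[simp]: "cnj (sg n i) = sg n i" by (simp add: sg_def)

lemma Xm_carrier[simp]: "Xm n W \<in> carrier_mat (2*n) (2*n)" by (simp add: Xm_def)
lemma Xm_dim[simp]: "dim_row (Xm n W) = 2*n" "dim_col (Xm n W) = 2*n" by (simp_all add: Xm_def)

lemma Xm_index: "i < 2*n \<Longrightarrow> j < 2*n \<Longrightarrow> Xm n W $$ (i,j) = (Sf W i j + sg n i * sg n j * Sf W (sig n i) (sig n j)) / 2"
  by (simp add: Xm_def)

lemma Xm_skew: "skew_hermitian (Xm n W)"
  unfolding skew_hermitian_def
proof (rule eq_matI)
  fix i j assume "i < dim_row (- Xm n W)" "j < dim_col (- Xm n W)"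
  hence ij: "i < 2*n" "j < 2*n" by auto
  show "ctrans (Xm n W) $$ (i,j) = (- Xm n W) $$ (i,j)"
    using ij by (simp add: Xm_index algebra_simps)
qed auto

lemma Xm_ham: "hamiltonian n (Xm n W)"
  unfolding hamiltonian_def
proof (intro conjI Xm_carrier eq_matI)
  fix i j assume "i < dim_row (Jmat n * Xm n W)" "j < dim_col (Jmat n * Xm n W)"
  hence ij: "i < 2*n" "j < 2*n" by auto
  have a: "ctrans (Jmat n * Xm n W) $$ (i,j) = cnj ((Jmat n * Xm n W) $$ (j,i))"
    by (rule index_ctrans) (simp_all add: ij)
  have b: "(Jmat n * Xm n W) $$ (j,i) = sg n j * Xm n W $$ (sig n j, i)"
    by (rule J_mult_index[OF Xm_carrier ij(2) ij(1)])
  have c: "(Jmat n * Xm n W) $$ (i,j) = sg n i * Xm n W $$ (sig n i, j)"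
    by (rule J_mult_index[OF Xm_carrier ij(1) ij(2)])
  have e1: "ctrans (Jmat n * Xm n W) $$ (i,j) = sg n j * (- Sf W i (sig n j) + sg n j * sg n i * Sf W (sig n i) j) / 2"
    unfolding a b using ij sig_lt[of i n] sig_lt[of j n] sig_sig[of j n] sg_sig[of j n]
    by (simp add: Xm_index algebra_simps)
  have e2: "(Jmat n * Xm n W) $$ (i,j) = sg n i * (Sf W (sig n i) j - sg n i * sg n j * Sf W i (sig n j)) / 2"
    unfolding c using ij sig_lt[of i n] sig_lt[of j n] sig_sig[of i n] sg_sig[of i n]
    by (simp add: Xm_index algebra_simps)
  show "ctrans (Jmat n * Xm n W) $$ (i,j) = (Jmat n * Xm n W) $$ (i,j)"
    unfolding e1 e2 by (cases "i < n"; cases "j < n") (simp_all add: sg_def algebra_simps)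
qed auto

lemma Xm_diag: assumes "\<forall>j<2*n. Im (W $$ (j,j)) = 0" "i < 2*n"
  shows "Xm n W $$ (i,i) = 0"
proof -
  have z: "Sf W j j = 0" if "j < 2*n" for j
    using assms(1) that by (simp add: Sf_def complex_eq_iff)
  show ?thesis using assms(2) z[of i] z[of "sig n i"] sig_lt[of i n] by (simp add: Xm_index)
qed

lemma Xm_orth:
  assumes W: "W \<in> carrier_mat (2*n) (2*n)" and H: "hamiltonian n K" and S: "skew_hermitian K"
  shows "Re (ip (2*n) (Xm n W) K) = Re (ip (2*n) W K)"
proof -
  have K: "K \<in> carrier_mat (2*n) (2*n)" using H by (simp add: hamiltonian_def)
  define T1 where "T1 = (\<Sum>i<2*n. \<Sum>k<2*n. cnj (Sf W k i) * K $$ (k,i))"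
  define T2 where "T2 = (\<Sum>i<2*n. \<Sum>k<2*n. cnj (Sf W (sig n k) (sig n i)) * K $$ (sig n k, sig n i))"
  have "ip (2*n) (Xm n W) K = (\<Sum>i<2*n. \<Sum>k<2*n. cnj (Sf W k i) * K $$ (k,i) / 2
         + cnj (Sf W (sig n k) (sig n i)) * K $$ (sig n k, sig n i) / 2)"
    unfolding ip_def
  proof (intro sum.cong refl)
    fix i k assume "i \<in> {..<2*n}" "k \<in> {..<2*n}"
    hence ik: "i < 2*n" "k < 2*n" by auto
    have e: "K $$ (sig n k, sig n i) = sg n k * sg n i * K $$ (k,i)" by (rule ham_skew_entry[OF H S ik(2) ik(1)])
    have "cnj (Xm n W $$ (k,i)) * K $$ (k,i) = (cnj (Sf W k i) + sg n k * sg n i * cnj (Sf W (sig n k) (sig n i))) / 2 * K $$ (k,i)"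
      using ik by (simp add: Xm_index del: Sf_cnj)
    also have "\<dots> = cnj (Sf W k i) * K $$ (k,i) / 2 + cnj (Sf W (sig n k) (sig n i)) * (sg n k * sg n i * K $$ (k, i)) / 2"
      by (simp add: algebra_simps del: Sf_cnj)
    also have "\<dots> = cnj (Sf W k i) * K $$ (k,i) / 2 + cnj (Sf W (sig n k) (sig n i)) * K $$ (sig n k, sig n i) / 2"
      unfolding e ..
    finally show "cnj (Xm n W $$ (k,i)) * K $$ (k,i) = cnj (Sf W k i) * K $$ (k,i) / 2
         + cnj (Sf W (sig n k) (sig n i)) * K $$ (sig n k, sig n i) / 2" .
  qed
  also have "\<dots> = T1 / 2 + T2 / 2"
    unfolding T1_def T2_def by (simp only: sum.distrib sum_divide_distrib)
  also have "T2 = T1"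
  proof -
    have "T2 = (\<Sum>i<2*n. \<Sum>k<2*n. cnj (Sf W k (sig n i)) * K $$ (k, sig n i))"
      unfolding T2_def by (rule sum.cong[OF refl]) (rule sum_sig[where f = "\<lambda>k. cnj (Sf W k _) * K $$ (k, _)"])
    also have "\<dots> = T1" unfolding T1_def by (rule sum_sig[where f = "\<lambda>i. \<Sum>k<2*n. cnj (Sf W k i) * K $$ (k, i)"])
    finally show ?thesis .
  qed
  finally have XT: "ip (2*n) (Xm n W) K = T1" by simp
  define U where "U = (\<Sum>i<2*n. \<Sum>k<2*n. W $$ (i,k) * K $$ (k,i))"
  have "2 * T1 = (\<Sum>i<2*n. \<Sum>k<2*n. cnj (W $$ (k,i)) * K $$ (k,i) - W $$ (i,k) * K $$ (k,i))"
    unfolding T1_def sum_distrib_left by (intro sum.cong refl) (simp add: Sf_def field_simps)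
  also have "\<dots> = ip (2*n) W K - U" unfolding ip_def U_def by (simp only: sum_subtractf)
  finally have T1U: "2 * T1 = ip (2*n) W K - U" .
  have "U = (\<Sum>i<2*n. \<Sum>k<2*n. - cnj (cnj (W $$ (i,k)) * K $$ (i,k)))"
    unfolding U_def
  proof (intro sum.cong refl)
    fix i k assume "i \<in> {..<2*n}" "k \<in> {..<2*n}"
    hence "K $$ (k,i) = - cnj (K $$ (i,k))" by (intro skew_entry[OF S K]) auto
    thus "W $$ (i,k) * K $$ (k,i) = - cnj (cnj (W $$ (i,k)) * K $$ (i,k))" by simp
  qed
  also have "\<dots> = - cnj (\<Sum>k<2*n. \<Sum>i<2*n. cnj (W $$ (i,k)) * K $$ (i,k))"
    by (subst sum.swap) (simp add: sum_negf)
  also have "\<dots> = - cnj (ip (2*n) W K)" by (simp add: ip_def)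
  finally have "U = - cnj (ip (2*n) W K)" .
  hence "2 * T1 = ip (2*n) W K + cnj (ip (2*n) W K)" using T1U by simp
  hence "Re (2 * T1) = 2 * Re (ip (2*n) W K)" by simp
  thus ?thesis using XT by simp
qed



lemma ip_diff_zero: assumes M: "M \<in> carrier_mat m m" and N: "N \<in> carrier_mat m m"
  and z: "Re (ip m (M - N) (M - N)) = 0"
  shows "M = N"
proof -
  define f where "f = (\<lambda>i k. (cmod ((M - N) $$ (k,i)))^2)"
  have re: "Re (cnj w * w) = (cmod w)^2" for w :: complex
  proof -
    have "Re (cnj w * w) = Re w ^ 2 + Im w ^ 2" by (simp add: power2_eq_square)
    also have "\<dots> = (cmod w)^2" by (simp add: cmod_power2)
    finally show ?thesis .
  qed
  have "Re (ip m (M - N) (M - N)) = (\<Sum>i<m. \<Sum>k<m. f i k)"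
    unfolding ip_def f_def by (simp only: Re_sum re)
  hence s: "(\<Sum>i<m. \<Sum>k<m. f i k) = 0" using z by simp
  have nn: "\<And>i k. f i k \<ge> 0" unfolding f_def by simp
  have "\<forall>i\<in>{..<m}. (\<Sum>k<m. f i k) = 0"
    using s by (subst (asm) sum_nonneg_eq_0_iff) (auto intro: sum_nonneg nn)
  hence "\<forall>i\<in>{..<m}. \<forall>k\<in>{..<m}. f i k = 0"
    using nn by (subst (asm) sum_nonneg_eq_0_iff) auto
  hence e: "(M - N) $$ (k,i) = 0" if "k < m" "i < m" for k i
    using that unfolding f_def by auto
  show ?thesis
  proof (rule eq_matI)
    fix k i assume "k < dim_row N" "i < dim_col N"
    hence ki: "k < m" "i < m" using N by auto
    thus "M $$ (k,i) = N $$ (k,i)" using e[OF ki] M N by simp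
  qed (use M N in auto)
qed

lemma ham_skew_diff: assumes "hamiltonian n K1" "skew_hermitian K1" "hamiltonian n K2" "skew_hermitian K2"
  shows "hamiltonian n (K1 - K2) \<and> skew_hermitian (K1 - K2)"
proof -
  have K1: "K1 \<in> carrier_mat (2*n) (2*n)" and K2: "K2 \<in> carrier_mat (2*n) (2*n)"
    using assms by (auto simp: hamiltonian_def)
  have "Jmat n * (K1 - K2) = Jmat n * K1 - Jmat n * K2"
    by (rule mult_minus_distrib_mat[OF Jmat_carrier K1 K2])
  moreover have "ctrans (Jmat n * K1 - Jmat n * K2) = ctrans (Jmat n * K1) - ctrans (Jmat n * K2)"
    by (rule ctrans_minus) (use K1 K2 in \<open>auto intro: mult_carrier_mat\<close>)
  ultimately have "ctrans (Jmat n * (K1 - K2)) = ctrans (Jmat n * K1) - ctrans (Jmat n * K2)" by simp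
  hence h: "ctrans (Jmat n * (K1 - K2)) = Jmat n * (K1 - K2)"
    using assms `Jmat n * (K1 - K2) = Jmat n * K1 - Jmat n * K2` by (simp add: hamiltonian_def)
  have "ctrans (K1 - K2) = ctrans K1 - ctrans K2" by (rule ctrans_minus[OF K1 K2])
  also have "\<dots> = - K1 - - K2" using assms by (simp add: skew_hermitian_def)
  also have "\<dots> = - (K1 - K2)" using K1 K2 by (intro eq_matI) auto
  finally show ?thesis using h K1 K2 by (simp add: hamiltonian_def skew_hermitian_def minus_carrier_mat)
qed



theorem lemma4p2:
  fixes n :: nat and A Z :: "complex mat"
  assumes "hamiltonian n A"
    and "Z \<in> USp n"
  shows "\<exists>X \<in> carrier_mat (2*n) (2*n).
           rgrad n A Z = Z * X \<and> skew_hermitian X \<and> hamiltonian n X \<and>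
           (\<forall>i<2*n. X $$ (i,i) = 0)"
proof -
  have A: "A \<in> carrier_mat (2*n) (2*n)" using assms(1) by (simp add: hamiltonian_def)
  have Z: "Z \<in> carrier_mat (2*n) (2*n)" and ZZ: "ctrans Z * Z = 1\<^sub>m (2*n)"
    using assms(2) by (auto simp: USp_def unitary_mat_def)
  define G where "G = egrad (2*n) (ftilde n A) Z"
  define W where "W = ctrans Z * G"
  define X where "X = Xm n W"
  have G: "G \<in> carrier_mat (2*n) (2*n)" by (simp add: G_def egrad_def)
  have W: "W \<in> carrier_mat (2*n) (2*n)" unfolding W_def using Z G by (auto intro: mult_carrier_mat)
  have X: "X \<in> carrier_mat (2*n) (2*n)" by (simp add: X_def)
  have ZX: "Z * X \<in> carrier_mat (2*n) (2*n)" using Z X by (auto intro: mult_carrier_mat)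
  have inT: "Z * X \<in> tangent_space n Z"
    unfolding tangent_space_def X_def using Xm_ham Xm_skew by blast
  have orth: "rinner (G - Z * X) Y = 0" if Y: "Y \<in> tangent_space n Z" for Y
  proof -
    obtain K where YK: "Y = Z * K" and H: "hamiltonian n K" and S: "skew_hermitian K"
      using Y unfolding tangent_space_def by blast
    have K: "K \<in> carrier_mat (2*n) (2*n)" using H by (simp add: hamiltonian_def)
    have cW: "ctrans W = ctrans G * Z"
      unfolding W_def using ctrans_mult[of "ctrans Z" "2*n" "2*n" G "2*n"] Z G by simp
    have "ctrans (G - Z * X) = ctrans G - ctrans (Z * X)" by (rule ctrans_minus[OF G ZX])
    also have "ctrans (Z * X) = ctrans X * ctrans Z" by (rule ctrans_mult[OF Z X])
    finally have c1: "ctrans (G - Z * X) = ctrans G - ctrans X * ctrans Z" .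
    have cG: "ctrans G \<in> carrier_mat (2*n) (2*n)" "ctrans X \<in> carrier_mat (2*n) (2*n)"
      "ctrans Z \<in> carrier_mat (2*n) (2*n)" using G X Z by auto
    have ZK: "Z * K \<in> carrier_mat (2*n) (2*n)" using Z K by (auto intro: mult_carrier_mat)
    have XZ: "ctrans X * ctrans Z \<in> carrier_mat (2*n) (2*n)" using cG by (auto intro: mult_carrier_mat)
    have "ctrans (G - Z * X) * (Z * K) = ctrans G * (Z * K) - (ctrans X * ctrans Z) * (Z * K)"
      unfolding c1 by (rule minus_mult_distrib_mat[OF cG(1) XZ ZK])
    also have "ctrans G * (Z * K) = ctrans W * K"
      unfolding cW using cG Z K by simp
    also have "(ctrans X * ctrans Z) * (Z * K) = ctrans X * (ctrans Z * (Z * K))"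
      by (rule assoc_mult_mat[OF cG(2) cG(3) ZK])
    also have "ctrans Z * (Z * K) = (ctrans Z * Z) * K"
      by (rule assoc_mult_mat[OF cG(3) Z K, symmetric])
    also have "(ctrans Z * Z) * K = K" unfolding ZZ using K by simp
    finally have e: "ctrans (G - Z * X) * (Z * K) = ctrans W * K - ctrans X * K" .
    have GZX: "G - Z * X \<in> carrier_mat (2*n) (2*n)" using G ZX by (auto intro: minus_carrier_mat)
    have "rinner (G - Z * X) Y = Re (tr (ctrans W * K - ctrans X * K))"
      unfolding YK rinner_tr[OF GZX] e ..
    also have "\<dots> = Re (tr (ctrans W * K)) - Re (tr (ctrans X * K))"
    proof -
      have "ctrans W * K \<in> carrier_mat (2*n) (2*n)" "ctrans X * K \<in> carrier_mat (2*n) (2*n)"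
        using W X K by (auto intro!: mult_carrier_mat)
      thus ?thesis by (simp add: tr_minus)
    qed
    also have "\<dots> = Re (ip (2*n) W K) - Re (ip (2*n) X K)"
      using W X K by (simp add: tr_ip)
    also have "\<dots> = 0" unfolding X_def using Xm_orth[OF W H S] by simp
    finally show ?thesis .
  qed
  have uniq: "P = Z * X" if P: "P \<in> tangent_space n Z" "\<forall>Y\<in>tangent_space n Z. rinner (G - P) Y = 0" for P
  proof -
    obtain K where PK: "P = Z * K" and H: "hamiltonian n K" and S: "skew_hermitian K"
      using P unfolding tangent_space_def by blast
    have K: "K \<in> carrier_mat (2*n) (2*n)" using H by (simp add: hamiltonian_def)
    have HS: "hamiltonian n (K - X) \<and> skew_hermitian (K - X)"
      using ham_skew_diff[OF H S] Xm_ham Xm_skew unfolding X_def by blast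
    have PC: "P \<in> carrier_mat (2*n) (2*n)" unfolding PK using Z K by (auto intro: mult_carrier_mat)
    have D: "P - Z * X = Z * (K - X)" unfolding PK by (rule mult_minus_distrib_mat[OF Z K X, symmetric])
    have DT: "P - Z * X \<in> tangent_space n Z" unfolding D tangent_space_def using HS by blast
    have DC: "P - Z * X \<in> carrier_mat (2*n) (2*n)" using PC ZX by (auto intro: minus_carrier_mat)
    have GP: "G - P \<in> carrier_mat (2*n) (2*n)" using G PC by (auto intro: minus_carrier_mat)
    have GZX: "G - Z * X \<in> carrier_mat (2*n) (2*n)" using G ZX by (auto intro: minus_carrier_mat)
    have r1: "Re (ip (2*n) (G - P) (P - Z * X)) = 0" using P(2) DT rinner_ip[OF GP DC] by simp
    have r2: "Re (ip (2*n) (G - Z * X) (P - Z * X)) = 0" using orth[OF DT] rinner_ip[OF GZX DC] by simp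
    have "ip (2*n) (P - Z * X) (P - Z * X) = ip (2*n) (G - Z * X) (P - Z * X) - ip (2*n) (G - P) (P - Z * X)"
      unfolding ip_def sum_subtractf[symmetric]
    proof (intro sum.cong refl)
      fix i k assume "i \<in> {..<2*n}" "k \<in> {..<2*n}"
      hence ik: "i < 2*n" "k < 2*n" by auto
      have dims: "dim_row (Z * X) = 2*n" "dim_col (Z * X) = 2*n" "dim_row P = 2*n" "dim_col P = 2*n"
        using ZX PC by auto
      have e1: "(P - Z * X) $$ (k,i) = P $$ (k,i) - (Z * X) $$ (k,i)" using ik dims by simp
      have e2: "(G - Z * X) $$ (k,i) = G $$ (k,i) - (Z * X) $$ (k,i)" using ik dims by simp
      have e3: "(G - P) $$ (k,i) = G $$ (k,i) - P $$ (k,i)" using ik dims by simp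
      show "cnj ((P - Z * X) $$ (k,i)) * (P - Z * X) $$ (k,i) =
        cnj ((G - Z * X) $$ (k,i)) * (P - Z * X) $$ (k,i) - cnj ((G - P) $$ (k,i)) * (P - Z * X) $$ (k,i)"
        unfolding e1 e2 e3 by (simp add: algebra_simps)
    qed
    hence "Re (ip (2*n) (P - Z * X) (P - Z * X)) = 0" using r1 r2 by simp
    thus ?thesis by (rule ip_diff_zero[OF PC ZX])
  qed
  have rg: "rgrad n A Z = Z * X"
    unfolding rgrad_def orth_proj_def G_def[symmetric]
    by (rule the_equality) (use inT orth uniq in blast)+
  have diag: "\<forall>i<2*n. X $$ (i,i) = 0"
  proof (intro allI impI)
    fix i assume i: "i < 2*n"
    have "\<forall>j<2*n. Im (W $$ (j,j)) = 0" using W_diag[OF A Z] unfolding W_def G_def by blast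
    thus "X $$ (i,i) = 0" unfolding X_def by (rule Xm_diag[OF _ i])
  qed
  show ?thesis
    using X rg Xm_skew Xm_ham diag unfolding X_def by blast
qed

end
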